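(* Let $c_1,\dots,c_m \in \mathbb{R}^{n_y}\setminus\{0\}$, $d_1,\dots,d_m\in\mathbb{R}$, and $p_j(y,w) := \frac{d_j - c_j^\top(y-w)}{\|c_j\|_2}$. Let $G\in\mathbb{R}^{m\times n_y}$ be the matrix with rows $-c_j^\top/\|c_j\|_2$, $g\in\mathbb{R}^m$ the vector with entries $d_j/\|c_j\|_2$, and $e_m\in\mathbb{R}^m$ the all-ones vector. Let the uncertainty set be a nonempty compact convex polytope $\mathbb{W} := \{w\in\mathbb{R}^{n_y}\mid Hw\le h\}$ with $H\in\mathbb{R}^{q\times n_y}$, $h\in\mathbb{R}^q$. Let $\hat w^{(1)},\dots,\hat w^{(N)}\in\mathbb{W}$, $\nu := \frac1N\sum_{i=1}^N\boldsymbol{\delta}_{\hat w^{(i)}}$, $\theta>0$, and $\mathbb{D} := \{\mu\in\mathcal{P}(\mathbb{W})\mid W(\mu,\nu)\le\theta\}$. Then for all $y\in\mathbb{R}^{n_y}$ and $z\in\mathbb{R}$, $$\sup_{\mu\in\mathbb{D}}\mathbb{E}^\mu\Big[\max\big\{\min_{j=1,\dots,m}p_j(y,w)-z,\,-z,\,0\big\}\Big]$$ equals the optimal value of $$\begin{aligned}\inf_{\lambda,s,\rho,\gamma,\eta,\zeta}\ & \lambda\theta + \frac1N\sum_{i=1}^N s_i\\ \text{s.t. }& \langle\rho_i, G(y-\hat w^{(i)})+g\rangle + \langle\gamma_i, h - H\hat w^{(i)}\rangle \le s_i + z,\\ & \langle \eta_i, h-H\hat w^{(i)}\rangle \le s_i+z,\\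 & \langle \zeta_i, h-H\hat w^{(i)}\rangle \le s_i,\\ & \|H^\top\gamma_i + G^\top\rho_i\|_*\le\lambda,\quad \|H^\top\eta_i\|_*\le\lambda,\quad \|H^\top\zeta_i\|_*\le\lambda,\\ & \langle\rho_i,e_m\rangle = 1,\quad \gamma_i\ge0,\ \rho_i\ge0,\ \eta_i\ge0,\ \zeta_i\ge0,\end{aligned}$$ where all constraints hold for $i=1,\dots,N$, with variables $\lambda\in\mathbb{R}$, $s\in\mathbb{R}^N$, $\rho_i\in\mathbb{R}^m$, $\gamma_i,\eta_i,\zeta_i\in\mathbb{R}^q$.
   Context: $\mathcal{P}(\mathbb{W})$ is the set of Borel probability measures on $\mathbb{W}$; $\boldsymbol{\delta}_w$ is the Dirac measure at $w$; in the expectation, $w$ is distributed according to $\mu$. The Wasserstein distance is $W(\mu,\nu) := \min_{\kappa\in\mathcal{P}(\mathbb{W}^2)}\{\int_{\mathbb{W}^2}\|w-w'\|\,\mathrm{d}\kappa(w,w') \mid \Pi^1\kappa=\mu,\ \Pi^2\kappa=\nu\}$, where $\Pi^i\kappa$ is the $i$th marginal and $\|\cdot\|$ is an arbitrary norm on $\mathbb{R}^{n_y}$; $\|\cdot\|_*$ is its dual norm, $\|v\|_* := \sup_{\|\xi\|\le1}\langle v,\xi\rangle$. Vector inequalities are componentwise. *)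

theory Defs
  imports "HOL-Probability.Probability"
begin

definition is_norm :: "('a::real_vector \<Rightarrow> real) \<Rightarrow> bool" where
  "is_norm nrm \<longleftrightarrow> (\<forall>x. nrm x = 0 \<longleftrightarrow> x = 0) \<and>
     (\<forall>a x. nrm (a *\<^sub>R x) = \<bar>a\<bar> * nrm x) \<and>
     (\<forall>x y. nrm (x + y) \<le> nrm x + nrm y)"

definition dual_norm :: "('a::real_inner \<Rightarrow> real) \<Rightarrow> 'a \<Rightarrow> real" where
  "dual_norm nrm v = Sup {inner v \<xi> | \<xi>. nrm \<xi> \<le> 1}"

text \<open>Borel probability measures supported on the set W (identified with P(W)).\<close>
definition prob_measures_on :: "'a::euclidean_space set \<Rightarrow> 'a measure set" where
  "prob_measures_on W = {\<mu>. sets \<mu> = sets borel \<and> prob_space \<mu> \<and> emeasure \<mu> W = 1}"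

definition couplings :: "'a::euclidean_space measure \<Rightarrow> 'a measure \<Rightarrow> ('a \<times> 'a) measure set" where
  "couplings \<mu> \<nu> = {\<kappa>. sets \<kappa> = sets borel \<and> prob_space \<kappa> \<and>
      distr \<kappa> borel fst = \<mu> \<and> distr \<kappa> borel snd = \<nu>}"

definition wasserstein :: "('a::euclidean_space \<Rightarrow> real) \<Rightarrow> 'a measure \<Rightarrow> 'a measure \<Rightarrow> ennreal" where
  "wasserstein nrm \<mu> \<nu> =
     (INF \<kappa>\<in>couplings \<mu> \<nu>. \<integral>\<^sup>+ p. ennreal (nrm (fst p - snd p)) \<partial>\<kappa>)"

text \<open>Empirical measure (1/N) sum_i delta_(what i), samples indexed by a finite type.\<close>
definition empirical_measure :: "('k::finite \<Rightarrow> 'a::euclidean_space) \<Rightarrow> 'a measure" where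
  "empirical_measure what = distr (uniform_measure (count_space UNIV) UNIV) borel what"

end

theory Submission
  imports Defs
begin

lemma nrm_zero: "is_norm nrm \<Longrightarrow> nrm 0 = 0"
  unfolding is_norm_def by auto

lemma nrm_neg: "is_norm nrm \<Longrightarrow> nrm (- x) = nrm x"
  unfolding is_norm_def by (metis abs_minus_cancel abs_one mult_1 scaleR_minus1_left)

lemma nrm_nonneg: "is_norm nrm \<Longrightarrow> 0 \<le> nrm x"
proof -
  assume n: "is_norm nrm"
  have "nrm (x + - x) \<le> nrm x + nrm (- x)" using n unfolding is_norm_def by blast
  then show ?thesis using nrm_zero[OF n] nrm_neg[OF n, of x] by simp
qed

lemma nrm_triangle: "is_norm nrm \<Longrightarrow> nrm (x + y) \<le> nrm x + nrm y"
  unfolding is_norm_def by blast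

lemma nrm_scale: "is_norm nrm \<Longrightarrow> nrm (a *\<^sub>R x) = \<bar>a\<bar> * nrm x"
  unfolding is_norm_def by blast

lemma nrm_commute: "is_norm nrm \<Longrightarrow> nrm (x - y) = nrm (y - x)"
  by (metis minus_diff_eq nrm_neg)

lemma nrm_diff_triangle: "is_norm nrm \<Longrightarrow> nrm (x - z) \<le> nrm (x - y) + nrm (y - z)"
  by (metis diff_add_cancel add_diff_eq nrm_triangle)

lemma nrm_sum: assumes n: "is_norm nrm" and "finite A" shows "nrm (sum f A) \<le> (\<Sum>i\<in>A. nrm (f i))"
  using assms(2)
proof (induction A rule: finite_induct)
  case empty then show ?case by (simp add: nrm_zero[OF n])
next
  case (insert a A)
  then show ?case using nrm_triangle[OF n, of "f a" "sum f A"] by simp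
qed

lemma nrm_upper:
  fixes nrm :: "'a::euclidean_space \<Rightarrow> real"
  assumes n: "is_norm nrm"
  shows "\<exists>C>0. \<forall>x. nrm x \<le> C * norm x"
proof -
  define C where "C = (\<Sum>b\<in>Basis. nrm b) + 1"
  have Cpos: "C > 0" unfolding C_def using nrm_nonneg[OF n] by (simp add: sum_nonneg add_nonneg_pos)
  have "nrm x \<le> C * norm x" for x
  proof -
    have "nrm x = nrm (\<Sum>b\<in>Basis. (x \<bullet> b) *\<^sub>R b)" by (simp add: euclidean_representation)
    also have "\<dots> \<le> (\<Sum>b\<in>Basis. nrm ((x \<bullet> b) *\<^sub>R b))" by (rule nrm_sum[OF n]) simp
    also have "\<dots> = (\<Sum>b\<in>Basis. \<bar>x \<bullet> b\<bar> * nrm b)" by (simp add: nrm_scale[OF n])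
    also have "\<dots> \<le> (\<Sum>b\<in>Basis. norm x * nrm b)"
      by (intro sum_mono mult_right_mono) (auto simp: Basis_le_norm nrm_nonneg[OF n])
    also have "\<dots> \<le> C * norm x" unfolding C_def by (simp add: sum_distrib_left[symmetric] algebra_simps)
    finally show ?thesis .
  qed
  with Cpos show ?thesis by blast
qed

lemma nrm_continuous:
  fixes nrm :: "'a::euclidean_space \<Rightarrow> real"
  assumes n: "is_norm nrm"
  shows "continuous_on S nrm"
proof -
  obtain C where C: "C > 0" "\<And>x. nrm x \<le> C * norm x" using nrm_upper[OF n] by blast
  have "\<bar>nrm x - nrm y\<bar> \<le> C * dist x y" for x y
  proof -
    have "nrm x \<le> nrm (x - y) + nrm y" using nrm_triangle[OF n, of "x - y" y] by simp
    moreover have "nrm y \<le> nrm (y - x) + nrm x" using nrm_triangle[OF n, of "y - x" x] by simp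
    moreover have "nrm (x - y) \<le> C * dist x y" "nrm (y - x) \<le> C * dist x y"
      using C(2)[of "x-y"] C(2)[of "y-x"] by (auto simp: dist_norm norm_minus_commute)
    ultimately show ?thesis by linarith
  qed
  then have "C-lipschitz_on S nrm" using C(1) by (intro lipschitz_onI) (auto simp: dist_real_def)
  then show ?thesis by (rule lipschitz_on_continuous_on)
qed

lemma nrm_lower:
  fixes nrm :: "'a::euclidean_space \<Rightarrow> real"
  assumes n: "is_norm nrm"
  shows "\<exists>m>0. \<forall>x. m * norm x \<le> nrm x"
proof -
  have cs: "compact (sphere (0::'a) 1)" by simp
  have ne: "sphere (0::'a) 1 \<noteq> {}" by (simp add: sphere_eq_empty)
  obtain u where u: "u \<in> sphere 0 1" "\<And>x. x \<in> sphere 0 1 \<Longrightarrow> nrm u \<le> nrm x"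
    using continuous_attains_inf[OF cs ne nrm_continuous[OF n]] by blast
  have "u \<noteq> 0" using u(1) by auto
  then have mpos: "nrm u > 0" using n nrm_nonneg[OF n, of u] unfolding is_norm_def
    by (metis order_le_less)
  have "nrm u * norm x \<le> nrm x" for x
  proof (cases "x = 0")
    case True then show ?thesis by (simp add: nrm_zero[OF n])
  next
    case False
    have "(1 / norm x) *\<^sub>R x \<in> sphere 0 1" using False by simp
    then have "nrm u \<le> nrm ((1 / norm x) *\<^sub>R x)" by (rule u(2))
    also have "\<dots> = nrm x / norm x" by (simp add: nrm_scale[OF n])
    finally show ?thesis using False by (simp add: field_simps)
  qed
  with mpos show ?thesis by blast
qed


lemma dn_bdd:
  fixes nrm :: "'a::euclidean_space \<Rightarrow> real"
  assumes n: "is_norm nrm"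
  shows "bdd_above {inner v \<xi> | \<xi>. nrm \<xi> \<le> 1}"
proof -
  obtain m where m: "m > 0" "\<And>x. m * norm x \<le> nrm x" using nrm_lower[OF n] by blast
  have "inner v \<xi> \<le> norm v / m" if "nrm \<xi> \<le> 1" for \<xi>
  proof -
    have "norm \<xi> \<le> 1 / m" using m(2)[of \<xi>] that m(1) by (simp add: field_simps)
    then have "inner v \<xi> \<le> norm v * (1 / m)"
      by (meson Cauchy_Schwarz_ineq2 norm_ge_zero order_trans abs_le_D1 mult_left_mono)
    then show ?thesis by simp
  qed
  then show ?thesis by (auto intro: bdd_aboveI[where M="norm v / m"])
qed

lemma dn_ge:
  fixes nrm :: "'a::euclidean_space \<Rightarrow> real"
  assumes n: "is_norm nrm" and "nrm \<xi> \<le> 1"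
  shows "inner v \<xi> \<le> dual_norm nrm v"
  unfolding dual_norm_def using assms by (intro cSup_upper dn_bdd) auto

lemma dn_le:
  fixes nrm :: "'a::euclidean_space \<Rightarrow> real"
  assumes "\<And>\<xi>. nrm \<xi> \<le> 1 \<Longrightarrow> inner v \<xi> \<le> M" and n: "is_norm nrm"
  shows "dual_norm nrm v \<le> M"
  unfolding dual_norm_def using assms(1) nrm_zero[OF n]
  by (intro cSup_least) (auto intro!: exI[of _ 0])

lemma dn_nonneg:
  fixes nrm :: "'a::euclidean_space \<Rightarrow> real"
  assumes n: "is_norm nrm"
  shows "0 \<le> dual_norm nrm v"
  using dn_ge[OF n, of 0 v] nrm_zero[OF n] by simp

lemma dn_zero:
  fixes nrm :: "'a::euclidean_space \<Rightarrow> real"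
  assumes n: "is_norm nrm"
  shows "dual_norm nrm 0 = 0"
  using dn_le[where v=0 and M=0 and nrm=nrm] n dn_nonneg[OF n, of 0] by simp

lemma dn_inner:
  fixes nrm :: "'a::euclidean_space \<Rightarrow> real"
  assumes n: "is_norm nrm"
  shows "inner v \<xi> \<le> dual_norm nrm v * nrm \<xi>"
proof (cases "nrm \<xi> = 0")
  case True
  then have "\<xi> = 0" using n unfolding is_norm_def by blast
  then show ?thesis by (simp add: nrm_zero[OF n])
next
  case False
  then have p: "nrm \<xi> > 0" using nrm_nonneg[OF n, of \<xi>] by simp
  have "nrm ((1 / nrm \<xi>) *\<^sub>R \<xi>) = 1" using p by (simp add: nrm_scale[OF n])
  then have "inner v ((1 / nrm \<xi>) *\<^sub>R \<xi>) \<le> dual_norm nrm v" using dn_ge[OF n] by (metis order_refl)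
  then have "inner v \<xi> / nrm \<xi> \<le> dual_norm nrm v" by simp
  then show ?thesis using p by (simp add: field_simps)
qed

lemma dn_convex:
  fixes nrm :: "'a::euclidean_space \<Rightarrow> real"
  assumes n: "is_norm nrm" and "a \<ge> 0" "b \<ge> 0"
  shows "dual_norm nrm (a *\<^sub>R x + b *\<^sub>R y) \<le> a * dual_norm nrm x + b * dual_norm nrm y"
proof (rule dn_le[OF _ n])
  fix \<xi> assume "nrm \<xi> \<le> 1"
  then have "inner x \<xi> \<le> dual_norm nrm x" "inner y \<xi> \<le> dual_norm nrm y" using dn_ge[OF n] by auto
  then show "inner (a *\<^sub>R x + b *\<^sub>R y) \<xi> \<le> a * dual_norm nrm x + b * dual_norm nrm y"
    using assms(2,3) by (simp add: inner_add_left add_mono mult_left_mono)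
qed

lemma dn_scale:
  fixes nrm :: "'a::euclidean_space \<Rightarrow> real"
  assumes n: "is_norm nrm"
  shows "dual_norm nrm (a *\<^sub>R x) \<le> \<bar>a\<bar> * dual_norm nrm x"
proof (rule dn_le[OF _ n])
  fix \<xi> assume h: "nrm \<xi> \<le> 1"
  have "inner (a *\<^sub>R x) \<xi> = inner x (a *\<^sub>R \<xi>)" by simp
  also have "\<dots> \<le> dual_norm nrm x * nrm (a *\<^sub>R \<xi>)" by (rule dn_inner[OF n])
  also have "\<dots> = dual_norm nrm x * (\<bar>a\<bar> * nrm \<xi>)" by (simp add: nrm_scale[OF n])
  also have "\<dots> \<le> dual_norm nrm x * \<bar>a\<bar>"
    using h dn_nonneg[OF n, of x] by (intro mult_left_mono) (auto simp: mult_left_le)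
  finally show "inner (a *\<^sub>R x) \<xi> \<le> \<bar>a\<bar> * dual_norm nrm x" by (simp add: mult.commute)
qed

lemma dn_norming:
  fixes nrm :: "'a::euclidean_space \<Rightarrow> real"
  assumes n: "is_norm nrm"
  shows "\<exists>x0. dual_norm nrm x0 \<le> 1 \<and> inner x0 d = nrm d"
proof (cases "d = 0")
  case True
  then show ?thesis using dn_zero[OF n] nrm_zero[OF n] by (intro exI[of _ 0]) auto
next
  case False
  have p: "nrm d > 0" using False n nrm_nonneg[OF n, of d] unfolding is_norm_def
    by (metis order_le_less)
  define u where "u = (1 / nrm d) *\<^sub>R d"
  have nu: "nrm u = 1" using p unfolding u_def by (simp add: nrm_scale[OF n])
  define B where "B = {\<xi>. nrm \<xi> \<le> 1}"
  define T where "T = {t *\<^sub>R u | t. t > 1}"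
  have cB: "convex B" unfolding B_def convex_def
  proof safe
    fix x y :: 'a and a b :: real assume h: "nrm x \<le> 1" "nrm y \<le> 1" "0 \<le> a" "0 \<le> b" "a + b = 1"
    have "nrm (a *\<^sub>R x + b *\<^sub>R y) \<le> a * nrm x + b * nrm y"
      using nrm_triangle[OF n] nrm_scale[OF n] h(3,4) by (metis abs_of_nonneg)
    also have "\<dots> \<le> a * 1 + b * 1" using h by (intro add_mono mult_left_mono) auto
    finally show "nrm (a *\<^sub>R x + b *\<^sub>R y) \<le> 1" using h(5) by simp
  qed
  have cT: "convex T" unfolding T_def convex_def
  proof safe
    fix t s a b :: real assume h: "t > 1" "s > 1" "0 \<le> a" "0 \<le> b" "a + b = 1"
    have "a *\<^sub>R t *\<^sub>R u + b *\<^sub>R s *\<^sub>R u = (a * t + b * s) *\<^sub>R u" by (simp add: scaleR_add_left)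
    moreover have "a * t + b * s > 1"
    proof (cases "a = 0")
      case True then show ?thesis using h by simp
    next
      case False
      then have "a * t > a * 1" using h by (intro mult_strict_left_mono) auto
      moreover have "b * s \<ge> b * 1" using h by (intro mult_left_mono) auto
      ultimately show ?thesis using h(5) by linarith
    qed
    ultimately show "\<exists>r. a *\<^sub>R t *\<^sub>R u + b *\<^sub>R s *\<^sub>R u = r *\<^sub>R u \<and> 1 < r" by blast
  qed
  have disj: "B \<inter> T = {}"
  proof -
    have "nrm (t *\<^sub>R u) > 1" if "t > 1" for t using that nu by (simp add: nrm_scale[OF n])
    then show ?thesis unfolding B_def T_def by fastforce
  qed
  have neB: "B \<noteq> {}" unfolding B_def using nrm_zero[OF n] by (auto intro!: exI[of _ 0])
  have neT: "T \<noteq> {}" unfolding T_def by (auto intro!: exI[of _ 2])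
  obtain a b where ab: "a \<noteq> 0" "\<And>x. x \<in> B \<Longrightarrow> inner a x \<le> b" "\<And>x. x \<in> T \<Longrightarrow> inner a x \<ge> b"
    using separating_hyperplane_sets[OF cB cT neB neT disj] by blast
  obtain C where C: "C > 0" "\<And>x. nrm x \<le> C * norm x" using nrm_upper[OF n] by blast
  define e where "e = (1 / (C * norm a)) *\<^sub>R a"
  have "nrm e \<le> 1" using C(2)[of e] C(1) ab(1) unfolding e_def by (simp add: field_simps)
  then have "inner a e \<le> b" using ab(2) unfolding B_def by simp
  moreover have "inner a e > 0" using ab(1) C(1) unfolding e_def by (simp add: field_simps)
  ultimately have bpos: "b > 0" by simp
  have aub: "inner a u \<ge> b"
  proof (rule ccontr)
    assume "\<not> inner a u \<ge> b"
    then have lt: "inner a u < b" by simp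
    then have "inner a u > 0" using ab(3)[of "2 *\<^sub>R u"] bpos unfolding T_def by force
    define q where "q = b / inner a u"
    define t where "t = (1 + q) / 2"
    have q1: "q > 1" unfolding q_def using lt \<open>inner a u > 0\<close> by (simp add: field_simps)
    have t1: "t > 1" "t < q" unfolding t_def using q1 by auto
    have "inner a (t *\<^sub>R u) \<ge> b" using ab(3) t1 unfolding T_def by blast
    moreover have "inner a (t *\<^sub>R u) < b" using t1(2) \<open>inner a u > 0\<close> unfolding q_def by (simp add: field_simps)
    ultimately show False by simp
  qed
  define x0 where "x0 = (1 / inner a u) *\<^sub>R a"
  have aup: "inner a u > 0" using aub bpos by simp
  have "dual_norm nrm x0 \<le> 1"
  proof (rule dn_le[OF _ n])
    fix \<xi> assume "nrm \<xi> \<le> 1"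
    then have "inner a \<xi> \<le> inner a u" using ab(2) aub unfolding B_def by force
    then show "inner x0 \<xi> \<le> 1" using aup unfolding x0_def by (simp add: field_simps)
  qed
  moreover have "inner x0 d = nrm d"
  proof -
    have "d = nrm d *\<^sub>R u" using p unfolding u_def by simp
    then have "inner x0 d = nrm d * inner x0 u" by (metis inner_scaleR_right)
    also have "inner x0 u = 1" using aup unfolding x0_def by simp
    finally show ?thesis by simp
  qed
  ultimately show ?thesis by blast
qed


lemma mv_add: "(M::real^'n^'m) *v (x + y) = M *v x + M *v y"
  by (simp add: matrix_vector_mult_def vec_eq_iff sum.distrib algebra_simps)
lemma mv_diff: "(M::real^'n^'m) *v (x - y) = M *v x - M *v y"
  by (simp add: matrix_vector_mult_def vec_eq_iff sum_subtractf algebra_simps)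
lemma mv_scale: "(M::real^'n^'m) *v (c *\<^sub>R x) = c *\<^sub>R (M *v x)"
  by (simp add: matrix_vector_mult_def vec_eq_iff sum_distrib_left algebra_simps)
lemma inner_mv: "inner (x::real^'m) ((M::real^'n^'m) *v y) = inner (transpose M *v x) y"
  by (simp add: dot_lmul_matrix)

lemma lin_bound:
  fixes c e b :: real
  assumes "\<And>k. k \<ge> 0 \<Longrightarrow> k * c + e \<le> b"
  shows "c \<le> 0"
proof (rule ccontr)
  assume "\<not> c \<le> 0"
  then have c: "c > 0" by simp
  define k where "k = (\<bar>b\<bar> + \<bar>e\<bar> + 1) / c"
  have "k \<ge> 0" using c unfolding k_def by simp
  then have "k * c + e \<le> b" by (rule assms)
  moreover have "k * c = \<bar>b\<bar> + \<bar>e\<bar> + 1" using c unfolding k_def by simp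
  ultimately show False by linarith
qed

lemma div_le_aux:
  fixes t X b K :: real
  assumes "t * X \<le> b" "t > 0" "b \<le> - t * K"
  shows "X \<le> - K"
proof -
  have "t * X \<le> t * (- K)" using assms by simp
  then show ?thesis using mult_le_cancel_left_pos[OF assms(2), of X "-K"] by blast
qed

lemma stepA:
  fixes G :: "real^'n::finite^'m::finite" and H :: "real^'n^'q::finite" and g :: "real^'m"
    and h :: "real^'q" and y wh :: "real^'n" and nrm :: "real^'n \<Rightarrow> real"
  assumes n: "is_norm nrm"
    and W_def: "W = {w. \<forall>r. (H *v w) $ r \<le> h $ r}"
    and W_ne: "W \<noteq> {}" and W_bd: "bounded W"
    and lam: "lam \<ge> 0" and eps: "eps > 0"
    and hyp: "\<And>w. w \<in> W \<Longrightarrow> Min (range (\<lambda>j. (G *v (y - w) + g) $ j)) - lam * nrm (w - wh) \<le> \<sigma>"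
  shows "\<exists>\<rho> \<gamma>. inner \<rho> (G *v (y - wh) + g) + inner \<gamma> (h - H *v wh) \<le> \<sigma> + eps
     \<and> dual_norm nrm (transpose H *v \<gamma> + transpose G *v \<rho>) \<le> lam + eps
     \<and> inner \<rho> (\<chi> j. 1) = 1 \<and> (\<forall>r. 0 \<le> \<gamma> $ r) \<and> (\<forall>j. 0 \<le> \<rho> $ j)"
proof (rule ccontr)
  assume nex: "\<not> ?thesis"
  define A where "A = G *v (y - wh) + g"
  define B where "B = h - H *v wh"
  define P where "P = (\<lambda>(\<rho>::real^'m) (\<gamma>::real^'q). inner \<rho> (\<chi> j. 1) = 1 \<and> (\<forall>r. 0 \<le> \<gamma> $ r) \<and> (\<forall>j. 0 \<le> \<rho> $ j))"
  define S where "S = {(transpose H *v \<gamma> + transpose G *v \<rho>, inner \<rho> A + inner \<gamma> B) | \<rho> \<gamma>. P \<rho> \<gamma>}"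
  define T where "T = {p. dual_norm nrm (fst p) \<le> lam + eps \<and> snd p \<le> \<sigma> + eps}"
  have ax1: "inner (axis j 1 :: real^'m) (\<chi> j. 1) = 1" for j by (simp add: inner_axis')
  have Pax: "P (axis j 1) (k *\<^sub>R axis r 1)" if "k \<ge> 0" for j r k
    using that ax1 unfolding P_def by (auto simp: axis_def)
  have Pax0: "P (axis j 1) 0" for j using ax1 unfolding P_def by (auto simp: axis_def)
  have disj: "S \<inter> T = {}"
    using nex unfolding S_def T_def P_def A_def B_def by (auto; meson)
  have cS: "convex S" unfolding convex_def
  proof safe
    fix p1 p2 u v assume h: "p1 \<in> S" "p2 \<in> S" "0 \<le> (u::real)" "0 \<le> v" "u + v = 1"
    from h(1) obtain \<rho>1 \<gamma>1 where 1: "p1 = (transpose H *v \<gamma>1 + transpose G *v \<rho>1, inner \<rho>1 A + inner \<gamma>1 B)" "P \<rho>1 \<gamma>1"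
      unfolding S_def by blast
    from h(2) obtain \<rho>2 \<gamma>2 where 2: "p2 = (transpose H *v \<gamma>2 + transpose G *v \<rho>2, inner \<rho>2 A + inner \<gamma>2 B)" "P \<rho>2 \<gamma>2"
      unfolding S_def by blast
    have "P (u *\<^sub>R \<rho>1 + v *\<^sub>R \<rho>2) (u *\<^sub>R \<gamma>1 + v *\<^sub>R \<gamma>2)"
      using 1(2) 2(2) h(3-5) unfolding P_def by (auto simp: inner_add_left)
    moreover have "u *\<^sub>R p1 + v *\<^sub>R p2 = (transpose H *v (u *\<^sub>R \<gamma>1 + v *\<^sub>R \<gamma>2) + transpose G *v (u *\<^sub>R \<rho>1 + v *\<^sub>R \<rho>2),
        inner (u *\<^sub>R \<rho>1 + v *\<^sub>R \<rho>2) A + inner (u *\<^sub>R \<gamma>1 + v *\<^sub>R \<gamma>2) B)"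
      unfolding 1(1) 2(1) by (simp add: mv_add mv_scale inner_add_left algebra_simps del: transpose_matrix_vector)
    ultimately show "u *\<^sub>R p1 + v *\<^sub>R p2 \<in> S" unfolding S_def by blast
  qed
  have cT: "convex T" unfolding convex_def
  proof (intro ballI allI impI)
    fix p1 p2 :: "(real^'n) \<times> real" and u v :: real
    assume h0: "p1 \<in> T" "p2 \<in> T" "0 \<le> u" "0 \<le> v" "u + v = 1"
    have h: "dual_norm nrm (fst p1) \<le> lam + eps" "snd p1 \<le> \<sigma> + eps"
      "dual_norm nrm (fst p2) \<le> lam + eps" "snd p2 \<le> \<sigma> + eps"
      using h0(1,2) unfolding T_def by auto
    have "dual_norm nrm (u *\<^sub>R fst p1 + v *\<^sub>R fst p2) \<le> u * dual_norm nrm (fst p1) + v * dual_norm nrm (fst p2)"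
      by (rule dn_convex[OF n h0(3,4)])
    also have "\<dots> \<le> u * (lam + eps) + v * (lam + eps)"
      using h h0 by (intro add_mono mult_left_mono) auto
    also have "u * (lam + eps) + v * (lam + eps) = lam + eps" using h0(5) by (metis distrib_right mult_1)
    finally have 1: "dual_norm nrm (u *\<^sub>R fst p1 + v *\<^sub>R fst p2) \<le> lam + eps" .
    have "u * snd p1 + v * snd p2 \<le> u * (\<sigma> + eps) + v * (\<sigma> + eps)"
      using h h0 by (intro add_mono mult_left_mono) auto
    also have "u * (\<sigma> + eps) + v * (\<sigma> + eps) = \<sigma> + eps" using h0(5) by (metis distrib_right mult_1)
    finally have 2: "u * snd p1 + v * snd p2 \<le> \<sigma> + eps" .
    show "u *\<^sub>R p1 + v *\<^sub>R p2 \<in> T" unfolding T_def using 1 2 by auto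
  qed
  obtain j0 :: 'm where True by blast
  have neS: "S \<noteq> {}" using Pax0[of j0] unfolding S_def by blast
  have "(0, \<sigma>) \<in> T" unfolding T_def using dn_zero[OF n] lam eps by auto
  then have neT: "T \<noteq> {}" by blast
  obtain a b where ab: "a \<noteq> 0" "\<And>x. x \<in> S \<Longrightarrow> inner a x \<le> b" "\<And>x. x \<in> T \<Longrightarrow> inner a x \<ge> b"
    using separating_hyperplane_sets[OF cS cT neS neT disj] by blast
  obtain d \<tau> where a: "a = (d, \<tau>)" by fastforce
  have Sineq: "inner d (transpose H *v \<gamma> + transpose G *v \<rho>) + \<tau> * (inner \<rho> A + inner \<gamma> B) \<le> b"
    if "P \<rho> \<gamma>" for \<rho> \<gamma> using ab(2)[of "(transpose H *v \<gamma> + transpose G *v \<rho>, inner \<rho> A + inner \<gamma> B)"] that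
    unfolding S_def a by auto
  have Tineq: "inner d x + \<tau> * r \<ge> b" if "dual_norm nrm x \<le> lam + eps" "r \<le> \<sigma> + eps" for x r
    using ab(3)[of "(x, r)"] that unfolding T_def a by auto
  have tau_le: "\<tau> \<le> 0"
  proof -
    have "k * \<tau> + (- \<tau> * (\<sigma> + eps)) \<le> - b" if "k \<ge> 0" for k
      using Tineq[of 0 "\<sigma> + eps - k"] dn_zero[OF n] lam eps that by (simp add: algebra_simps)
    then show ?thesis by (rule lin_bound)
  qed
  have ident: "inner \<rho> A + inner \<gamma> B - inner \<delta> (transpose H *v \<gamma> + transpose G *v \<rho>)
      = inner \<rho> (G *v (y - (wh + \<delta>)) + g) + inner \<gamma> (h - H *v (wh + \<delta>))" for \<rho> \<gamma> \<delta>
  proof -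
    have 1: "inner \<delta> (transpose H *v \<gamma>) = inner \<gamma> (H *v \<delta>)"
      by (metis inner_mv inner_commute)
    have 2: "inner \<delta> (transpose G *v \<rho>) = inner \<rho> (G *v \<delta>)"
      by (metis inner_mv inner_commute)
    have 3: "y - (wh + \<delta>) = (y - wh) - \<delta>" by simp
    show ?thesis unfolding A_def B_def 3 inner_add_right 1 2 mv_diff mv_add inner_diff_right
      by simp
  qed
  show False
  proof (cases "\<tau> = 0")
    case True
    then have d0: "d \<noteq> 0" using ab(1) a by (auto simp: zero_prod_def)
    have Hd: "(H *v d) $ r \<le> 0" for r
    proof -
      have "k * (H *v d) $ r + inner d (transpose G *v axis j0 1) \<le> b" if "k \<ge> 0" for k
      proof -
        have "inner d (transpose H *v (k *\<^sub>R axis r 1)) = inner (k *\<^sub>R axis r 1) (H *v d)"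
          by (metis inner_mv inner_commute)
        also have "\<dots> = k * (H *v d) $ r" by (simp add: inner_axis')
        finally have "inner d (transpose H *v (k *\<^sub>R axis r 1)) = k * (H *v d) $ r" .
        then show ?thesis using Sineq[OF Pax[OF that, of j0 r]] True by (simp add: inner_add_right)
      qed
      then show ?thesis by (rule lin_bound)
    qed
    obtain w0 where w0: "w0 \<in> W" using W_ne by blast
    have inW: "w0 + k *\<^sub>R d \<in> W" if "k \<ge> 0" for k
    proof -
      have "(H *v (w0 + k *\<^sub>R d)) $ r \<le> h $ r" for r
      proof -
        have "(H *v (w0 + k *\<^sub>R d)) $ r = (H *v w0) $ r + k * (H *v d) $ r" by (simp add: mv_add mv_scale)
        moreover have "k * (H *v d) $ r \<le> 0" using Hd[of r] that by (simp add: mult_nonneg_nonpos)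
        moreover have "(H *v w0) $ r \<le> h $ r" using w0 unfolding W_def by auto
        ultimately show ?thesis by linarith
      qed
      then show ?thesis unfolding W_def by auto
    qed
    obtain M where M: "\<And>w. w \<in> W \<Longrightarrow> norm w \<le> M" using W_bd unfolding bounded_iff by blast
    define k where "k = (M + norm w0 + 1) / norm d"
    have kp: "k \<ge> 0" unfolding k_def using M[OF w0] norm_ge_zero[of w0] by (intro divide_nonneg_nonneg) (linarith, simp)
    have pos: "0 \<le> M + norm w0 + 1" using M[OF w0] norm_ge_zero[of w0] by linarith
    have "norm (k *\<^sub>R d) = M + norm w0 + 1" unfolding k_def using d0 pos by simp
    moreover have "norm (k *\<^sub>R d) \<le> norm (w0 + k *\<^sub>R d) + norm w0"
      by (metis add_diff_cancel_left' norm_triangle_ineq4 add.commute)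
    moreover have "norm (w0 + k *\<^sub>R d) \<le> M" using M inW kp by blast
    ultimately show False by linarith
  next
    case False
    then have t: "- \<tau> > 0" using tau_le by simp
    define t where "t = - \<tau>"
    define \<delta> where "\<delta> = (1 / t) *\<^sub>R d"
    have d_eq: "d = t *\<^sub>R \<delta>" using t unfolding \<delta>_def t_def by simp
    obtain x0 where x0: "dual_norm nrm x0 \<le> 1" "inner x0 \<delta> = nrm \<delta>" using dn_norming[OF n] by blast
    define x where "x = (- (lam + eps)) *\<^sub>R x0"
    have "dual_norm nrm x \<le> \<bar>- (lam + eps)\<bar> * dual_norm nrm x0" unfolding x_def by (rule dn_scale[OF n])
    also have "\<bar>- (lam + eps)\<bar> = lam + eps" using lam eps by simp
    also have "(lam + eps) * dual_norm nrm x0 \<le> (lam + eps) * 1" using x0(1) lam eps by (intro mult_left_mono) auto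
    finally have "inner d x + \<tau> * (\<sigma> + eps) \<ge> b" using Tineq by simp
    then have Tb: "b \<le> - t * ((lam + eps) * nrm \<delta> + \<sigma> + eps)"
      unfolding x_def d_eq t_def using x0(2) by (simp add: inner_commute algebra_simps)
    have main: "inner \<rho> (G *v (y - (wh + \<delta>)) + g) + inner \<gamma> (h - H *v (wh + \<delta>)) \<ge> (lam + eps) * nrm \<delta> + \<sigma> + eps"
      if "P \<rho> \<gamma>" for \<rho> \<gamma>
    proof -
      have "t * (inner \<delta> (transpose H *v \<gamma> + transpose G *v \<rho>) - (inner \<rho> A + inner \<gamma> B)) \<le> b"
        using Sineq[OF that] unfolding d_eq t_def by (simp add: algebra_simps)
      then have "inner \<delta> (transpose H *v \<gamma> + transpose G *v \<rho>) - (inner \<rho> A + inner \<gamma> B) \<le> - ((lam + eps) * nrm \<delta> + \<sigma> + eps)"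
        using t Tb unfolding t_def by (rule div_le_aux)
      then show ?thesis using ident[of \<rho> \<gamma> \<delta>] by linarith
    qed
    define w where "w = wh + \<delta>"
    have wW: "w \<in> W"
    proof -
      have "(H *v w) $ r \<le> h $ r" for r
      proof -
        have "k * (h - H *v w) $ r + inner (axis j0 1) (G *v (y - w) + g) \<ge> (lam + eps) * nrm \<delta> + \<sigma> + eps" if "k \<ge> 0" for k
          using main[OF Pax[OF that, of j0 r]] unfolding w_def by (simp add: inner_axis')
        then have "k * (- (h - H *v w) $ r) + ((lam + eps) * nrm \<delta> + \<sigma> + eps) \<le> inner (axis j0 1) (G *v (y - w) + g)" if "k \<ge> 0" for k
          using that by (simp add: algebra_simps)
        then have "- (h - H *v w) $ r \<le> 0" by (rule lin_bound)
        then show ?thesis by simp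
      qed
      then show ?thesis unfolding W_def by auto
    qed
    have "(G *v (y - w) + g) $ j \<ge> (lam + eps) * nrm \<delta> + \<sigma> + eps" for j
      using main[OF Pax0[of j]] unfolding w_def by (simp add: inner_axis')
    then have "Min (range (\<lambda>j. (G *v (y - w) + g) $ j)) \<ge> (lam + eps) * nrm \<delta> + \<sigma> + eps"
      by (subst Min_ge_iff) auto
    moreover have "Min (range (\<lambda>j. (G *v (y - w) + g) $ j)) - lam * nrm \<delta> \<le> \<sigma>"
      using hyp[OF wW] unfolding w_def by simp
    moreover have "eps * nrm \<delta> \<ge> 0" using eps nrm_nonneg[OF n] by simp
    moreover have "(lam + eps) * nrm \<delta> = lam * nrm \<delta> + eps * nrm \<delta>" by (simp add: distrib_right)
    ultimately show False using eps by linarith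
  qed
qed


lemma continuous_on_Min_fin:
  fixes f :: "'i \<Rightarrow> 'a::topological_space \<Rightarrow> real"
  assumes "finite I" "I \<noteq> {}" "\<And>i. i \<in> I \<Longrightarrow> continuous_on S (f i)"
  shows "continuous_on S (\<lambda>x. Min ((\<lambda>i. f i x) ` I))"
  using assms
proof (induction I rule: finite_ne_induct)
  case (singleton x) then show ?case by simp
next
  case (insert a F)
  have "(\<lambda>x. Min ((\<lambda>i. f i x) ` insert a F)) = (\<lambda>x. min (f a x) (Min ((\<lambda>i. f i x) ` F)))"
    using insert.hyps by (auto simp: Min_insert)
  then show ?case using insert by (auto intro!: continuous_on_min)
qed

lemma U_eq: "uniform_measure (count_space UNIV) (UNIV::'k::finite set) = measure_pmf (pmf_of_set UNIV)"
proof (rule measure_eqI)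
  show "sets (uniform_measure (count_space UNIV) (UNIV::'k set)) = sets (measure_pmf (pmf_of_set UNIV))" by simp
  fix A :: "'k set" assume "A \<in> sets (uniform_measure (count_space UNIV) UNIV)"
  have fA: "finite A" by simp
  show "emeasure (uniform_measure (count_space UNIV) UNIV) A = emeasure (measure_pmf (pmf_of_set UNIV)) A"
    using fA by (simp add: emeasure_pmf_of_set divide_ennreal ennreal_of_nat_eq_real_of_nat)
qed

lemma emp_eq: "empirical_measure what = distr (measure_pmf (pmf_of_set UNIV)) borel what"
  unfolding empirical_measure_def U_eq ..

lemma integral_emp:
  fixes what :: "'k::finite \<Rightarrow> 'a::euclidean_space" and f :: "'a \<Rightarrow> real"
  assumes f: "f \<in> borel_measurable borel"
  shows "integral\<^sup>L (empirical_measure what) f = (1 / real CARD('k)) * (\<Sum>i\<in>UNIV. f (what i))"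
    and "integrable (empirical_measure what) f"
proof -
  have m: "what \<in> measurable (measure_pmf (pmf_of_set (UNIV::'k set))) borel" by simp
  have "integral\<^sup>L (empirical_measure what) f = (\<integral>i. f (what i) \<partial>measure_pmf (pmf_of_set UNIV))"
    unfolding emp_eq by (rule integral_distr[OF m f])
  also have "\<dots> = (\<Sum>i\<in>UNIV. f (what i) * pmf (pmf_of_set UNIV) i)"
    by (rule integral_measure_pmf_real) auto
  also have "\<dots> = (1 / real CARD('k)) * (\<Sum>i\<in>UNIV. f (what i))"
    by (simp add: sum_distrib_left mult.commute)
  finally show "integral\<^sup>L (empirical_measure what) f = (1 / real CARD('k)) * (\<Sum>i\<in>UNIV. f (what i))" .
  show "integrable (empirical_measure what) f"
    unfolding emp_eq integrable_distr_eq[OF m f]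
    by (rule integrable_measure_pmf_finite) simp
qed

lemma weak_dual:
  fixes what :: "'k::finite \<Rightarrow> 'a::euclidean_space" and L :: "'a \<Rightarrow> real"
  assumes n: "is_norm nrm" and Wc: "closed W"
    and mu: "\<mu> \<in> prob_measures_on W"
    and wd: "wasserstein nrm \<mu> (empirical_measure what) \<le> ennreal \<theta>"
    and Lc: "continuous_on UNIV L" and Lb: "\<And>w. w \<in> W \<Longrightarrow> \<bar>L w\<bar> \<le> Bd"
    and lam: "lam \<ge> 0" and th: "\<theta> > 0"
    and pt: "\<And>w i. w \<in> W \<Longrightarrow> L w \<le> s i + lam * nrm (w - what i)"
  shows "integral\<^sup>L \<mu> L \<le> lam * \<theta> + (1 / real CARD('k)) * (\<Sum>i\<in>UNIV. s i)"
proof -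
  define \<nu> where "\<nu> = empirical_measure what"
  define avg where "avg = (1 / real CARD('k)) * (\<Sum>i\<in>UNIV. s i)"
  have smu: "sets \<mu> = sets borel" and pmu: "prob_space \<mu>" and eW: "emeasure \<mu> W = 1"
    using mu unfolding prob_measures_on_def by auto
  have spmu: "space \<mu> = UNIV" using sets_eq_imp_space_eq[OF smu] by simp
  have Wb: "W \<in> sets borel" using Wc by simp
  have AEW: "AE x in \<mu>. x \<in> W"
  proof (rule AE_I'[of "space \<mu> - W"])
    have "emeasure \<mu> (space \<mu> - W) = emeasure \<mu> (space \<mu>) - emeasure \<mu> W"
      using Wb smu by (intro emeasure_compl) (auto simp: eW)
    also have "\<dots> = 0" using eW prob_space.emeasure_space_1[OF pmu] by simp
    finally show "space \<mu> - W \<in> null_sets \<mu>" using Wb smu by auto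
  qed auto
  have Lm: "L \<in> borel_measurable borel" by (rule borel_measurable_continuous_onI[OF Lc])
  define T where "T = (\<lambda>v. Min ((\<lambda>i. s i + lam * nrm (v - what i)) ` UNIV))"
  have Tc: "continuous_on UNIV T" unfolding T_def
    by (intro continuous_on_Min_fin continuous_intros continuous_on_compose2[OF nrm_continuous[OF n]]) auto
  have Tm: "T \<in> borel_measurable borel" by (rule borel_measurable_continuous_onI[OF Tc])
  have Tle: "T (what i) \<le> s i" for i
  proof -
    have mem: "s i + lam * nrm (what i - what i) \<in> range (\<lambda>j. s j + lam * nrm (what i - what j))"
      by (rule rangeI)
    have "T (what i) \<le> s i + lam * nrm (what i - what i)" unfolding T_def by (rule Min_le[OF _ mem]) simp
    then show ?thesis by (simp add: nrm_zero[OF n])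
  qed
  have Tint: "integral\<^sup>L \<nu> T \<le> avg"
  proof -
    have "integral\<^sup>L \<nu> T = (1 / real CARD('k)) * (\<Sum>i\<in>UNIV. T (what i))"
      unfolding \<nu>_def by (rule integral_emp[OF Tm])
    also have "\<dots> \<le> avg" unfolding avg_def
      by (intro mult_left_mono sum_mono Tle) auto
    finally show ?thesis .
  qed
  have ptw: "L w \<le> T v + lam * nrm (w - v)" if "w \<in> W" for w v
  proof -
    have "L w - lam * nrm (w - v) \<le> s i + lam * nrm (v - what i)" for i
    proof -
      have "nrm (w - what i) \<le> nrm (w - v) + nrm (v - what i)" by (rule nrm_diff_triangle[OF n])
      then have "lam * nrm (w - what i) \<le> lam * nrm (w - v) + lam * nrm (v - what i)"
        using lam by (metis distrib_left mult_left_mono)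
      then show ?thesis using pt[OF that, of i] by linarith
    qed
    then have "L w - lam * nrm (w - v) \<le> T v" unfolding T_def by (subst Min_ge_iff) auto
    then show ?thesis by linarith
  qed
  have key: "integral\<^sup>L \<mu> L \<le> avg + lam * \<theta> + lam * e" if e: "e > 0" for e
  proof -
    have "wasserstein nrm \<mu> \<nu> < ennreal (\<theta> + e)"
    proof -
      have "ennreal \<theta> < ennreal (\<theta> + e)"
        using e th by (intro ennreal_lessI) auto
      then show ?thesis using wd unfolding \<nu>_def by simp
    qed
    then obtain \<kappa> where k: "\<kappa> \<in> couplings \<mu> \<nu>" and kI: "(\<integral>\<^sup>+ p. ennreal (nrm (fst p - snd p)) \<partial>\<kappa>) < ennreal (\<theta> + e)"
      unfolding wasserstein_def by (auto simp: INF_less_iff)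
    have sk: "sets \<kappa> = sets borel" and pk: "prob_space \<kappa>" and d1: "distr \<kappa> borel fst = \<mu>" and d2: "distr \<kappa> borel snd = \<nu>"
      using k unfolding couplings_def by auto
    have mk: "f \<in> borel_measurable \<kappa>" if "f \<in> borel_measurable borel" for f :: "'a \<times> 'a \<Rightarrow> 'b::topological_space"
      using measurable_cong_sets[OF sk refl, of borel] that by blast
    have mfst: "fst \<in> measurable \<kappa> borel"
      by (rule mk[OF borel_measurable_continuous_onI[OF continuous_on_fst[OF continuous_on_id]]])
    have msnd: "snd \<in> measurable \<kappa> borel"
      by (rule mk[OF borel_measurable_continuous_onI[OF continuous_on_snd[OF continuous_on_id]]])
    have cD: "continuous_on UNIV (\<lambda>p::'a \<times> 'a. nrm (fst p - snd p))"
      by (intro continuous_on_compose2[OF nrm_continuous[OF n]] continuous_intros) auto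
    have mD: "(\<lambda>p. nrm (fst p - snd p)) \<in> borel_measurable \<kappa>"
      by (rule mk[OF borel_measurable_continuous_onI[OF cD]])
    have iL: "integrable \<kappa> (\<lambda>p. L (fst p))"
    proof -
      interpret prob_space \<mu> by (rule pmu)
      have "integrable \<mu> L"
        using AEW Lb by (intro integrable_const_bound[where B=Bd]) (auto simp: measurable_cong_sets[OF smu refl] Lm elim!: AE_mp)
      then show ?thesis using integrable_distr_eq[OF mfst Lm] d1 by simp
    qed
    have "integrable (distr \<kappa> borel snd) T" unfolding d2 \<nu>_def by (rule integral_emp(2)[OF Tm])
    then have iT: "integrable \<kappa> (\<lambda>p. T (snd p))"
      by (subst (asm) integrable_distr_eq[OF msnd Tm])
    have nnD: "(\<integral>\<^sup>+ p. ennreal (nrm (fst p - snd p)) \<partial>\<kappa>) < \<infinity>"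
      by (rule order.strict_trans[OF kI]) simp
    have iD: "integrable \<kappa> (\<lambda>p. nrm (fst p - snd p))"
      using nnD mD by (intro integrableI_bounded) (auto simp: nrm_nonneg[OF n])
    have intD: "(\<integral>p. nrm (fst p - snd p) \<partial>\<kappa>) \<le> \<theta> + e"
    proof -
      have "(\<integral>p. nrm (fst p - snd p) \<partial>\<kappa>) = enn2real (\<integral>\<^sup>+ p. ennreal (nrm (fst p - snd p)) \<partial>\<kappa>)"
        using mD by (intro integral_eq_nn_integral) (auto simp: nrm_nonneg[OF n])
      moreover obtain r where r: "(\<integral>\<^sup>+ p. ennreal (nrm (fst p - snd p)) \<partial>\<kappa>) = ennreal r" "r \<ge> 0"
        using nnD by (cases "(\<integral>\<^sup>+ p. ennreal (nrm (fst p - snd p)) \<partial>\<kappa>)") auto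
      moreover have "r < \<theta> + e" using kI r by (simp add: ennreal_less_iff)
      ultimately show ?thesis by simp
    qed
    have AEk: "AE p in \<kappa>. fst p \<in> W"
    proof -
      have "AE x in distr \<kappa> borel fst. x \<in> W" unfolding d1 by (rule AEW)
      then show ?thesis using AE_distr_iff[OF mfst, of "\<lambda>x. x \<in> W"] Wb by simp
    qed
    have "integral\<^sup>L \<mu> L = (\<integral>p. L (fst p) \<partial>\<kappa>)"
      using integral_distr[OF mfst Lm] d1 by simp
    also have "\<dots> \<le> (\<integral>p. T (snd p) + lam * nrm (fst p - snd p) \<partial>\<kappa>)"
      using AEk ptw by (intro integral_mono_AE iL) (auto intro!: iT iD elim!: AE_mp)
    also have "\<dots> = (\<integral>p. T (snd p) \<partial>\<kappa>) + lam * (\<integral>p. nrm (fst p - snd p) \<partial>\<kappa>)"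
      using iT iD by simp
    also have "(\<integral>p. T (snd p) \<partial>\<kappa>) = integral\<^sup>L \<nu> T"
      using integral_distr[OF msnd Tm] d2 by simp
    also have "lam * (\<integral>p. nrm (fst p - snd p) \<partial>\<kappa>) \<le> lam * (\<theta> + e)"
      using intD lam by (rule mult_left_mono)
    finally show ?thesis using Tint by (simp add: distrib_left)
  qed
  show ?thesis
  proof (rule field_le_epsilon)
    fix e :: real assume e: "e > 0"
    have "integral\<^sup>L \<mu> L \<le> avg + lam * \<theta> + lam * (e / (lam + 1))" using key[of "e / (lam + 1)"] e lam by simp
    moreover have "lam * (e / (lam + 1)) \<le> e" using e lam by (simp add: field_simps)
    ultimately show "integral\<^sup>L \<mu> L \<le> lam * \<theta> + (1 / real CARD('k)) * (\<Sum>i\<in>UNIV. s i) + e" unfolding avg_def by linarith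
  qed
qed


lemma sum_pair_bool: "(\<Sum>x\<in>(UNIV::('k::finite \<times> bool) set). g x) = (\<Sum>k\<in>UNIV. g (k, True) + g (k, False))"
proof -
  have "(\<Sum>x\<in>(UNIV::('k \<times> bool) set). g x) = (\<Sum>x\<in>(UNIV::'k set) \<times> (UNIV::bool set). g x)"
    by (simp add: UNIV_Times_UNIV)
  also have "\<dots> = (\<Sum>k\<in>UNIV. \<Sum>b\<in>UNIV. g (k, b))" by (simp add: sum.cartesian_product)
  also have "\<dots> = (\<Sum>k\<in>UNIV. g (k, True) + g (k, False))" by (simp add: UNIV_bool add.commute)
  finally show ?thesis .
qed

lemma avg_mix: "c * (\<Sum>k\<in>A. \<alpha> * f k + \<beta> * g k) = \<alpha> * (c * sum f A) + \<beta> * (c * sum g A)" for c :: real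
  unfolding sum.distrib sum_distrib_left[symmetric] by (simp add: algebra_simps)

lemma int_q:
  fixes g :: "'k::finite \<times> bool \<Rightarrow> real"
  assumes a: "0 \<le> \<alpha>" "\<alpha> \<le> 1"
  shows "(\<integral>x. g x \<partial>measure_pmf (pair_pmf (pmf_of_set UNIV) (bernoulli_pmf \<alpha>)))
     = (1 / real CARD('k)) * (\<Sum>k\<in>UNIV. \<alpha> * g (k, True) + (1 - \<alpha>) * g (k, False))"
proof -
  have "(\<integral>x. g x \<partial>measure_pmf (pair_pmf (pmf_of_set UNIV) (bernoulli_pmf \<alpha>)))
      = (\<Sum>x\<in>UNIV. g x * pmf (pair_pmf (pmf_of_set UNIV) (bernoulli_pmf \<alpha>)) x)"
    by (rule integral_measure_pmf_real) auto
  also have "\<dots> = (\<Sum>k\<in>UNIV. g (k, True) * ((1 / real CARD('k)) * \<alpha>) + g (k, False) * ((1 / real CARD('k)) * (1 - \<alpha>)))"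
    unfolding sum_pair_bool using a by (simp add: pmf_pair)
  also have "\<dots> = (1 / real CARD('k)) * (\<Sum>k\<in>UNIV. \<alpha> * g (k, True) + (1 - \<alpha>) * g (k, False))"
    unfolding sum_distrib_left by (intro sum.cong refl) (simp add: field_simps)
  finally show ?thesis .
qed

lemma mix:
  fixes what w1 w2 :: "'k::finite \<Rightarrow> 'a::euclidean_space" and L :: "'a \<Rightarrow> real"
  assumes n: "is_norm nrm" and Wc: "closed W"
    and w1: "\<And>i. w1 i \<in> W" and w2: "\<And>i. w2 i \<in> W" and a: "0 \<le> \<alpha>" "\<alpha> \<le> 1"
    and Lc: "continuous_on UNIV L"
    and cost: "\<alpha> * ((1 / real CARD('k)) * (\<Sum>i\<in>UNIV. nrm (w1 i - what i)))
       + (1 - \<alpha>) * ((1 / real CARD('k)) * (\<Sum>i\<in>UNIV. nrm (w2 i - what i))) \<le> \<theta>"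
  shows "\<exists>\<mu>\<in>prob_measures_on W. wasserstein nrm \<mu> (empirical_measure what) \<le> ennreal \<theta> \<and>
     integral\<^sup>L \<mu> L = \<alpha> * ((1 / real CARD('k)) * (\<Sum>i\<in>UNIV. L (w1 i)))
       + (1 - \<alpha>) * ((1 / real CARD('k)) * (\<Sum>i\<in>UNIV. L (w2 i)))"
proof -
  define q where "q = pair_pmf (pmf_of_set (UNIV::'k set)) (bernoulli_pmf \<alpha>)"
  define F where "F = (\<lambda>(k, b). (if b then w1 k else w2 k, what k))"
  define \<mu> where "\<mu> = distr (measure_pmf q) borel (fst \<circ> F)"
  define \<kappa> where "\<kappa> = distr (measure_pmf q) borel F"
  have Wb: "W \<in> sets borel" using Wc by simp
  have mF: "F \<in> measurable (measure_pmf q) borel" by simp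
  have mfF: "fst \<circ> F \<in> measurable (measure_pmf q) borel" by simp
  have mfst: "fst \<in> measurable (borel :: ('a \<times> 'a) measure) borel"
    by (rule borel_measurable_continuous_onI[OF continuous_on_fst[OF continuous_on_id]])
  have msnd: "snd \<in> measurable (borel :: ('a \<times> 'a) measure) borel"
    by (rule borel_measurable_continuous_onI[OF continuous_on_snd[OF continuous_on_id]])
  have fq: "finite (set_pmf q)" by (rule finite_subset[of _ UNIV]) auto
  have muP: "\<mu> \<in> prob_measures_on W"
  proof -
    have "sets \<mu> = sets borel" unfolding \<mu>_def by simp
    moreover have "prob_space \<mu>" unfolding \<mu>_def by (rule measure_pmf.prob_space_distr[OF mfF])
    moreover have "emeasure \<mu> W = 1"
    proof -
      have "(fst \<circ> F) -` W \<inter> space (measure_pmf q) = UNIV"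
        using w1 w2 unfolding F_def by auto
      then show ?thesis unfolding \<mu>_def using emeasure_distr[OF mfF Wb] by simp
    qed
    ultimately show ?thesis unfolding prob_measures_on_def by blast
  qed
  have kC: "\<kappa> \<in> couplings \<mu> (empirical_measure what)"
  proof -
    have "sets \<kappa> = sets borel" unfolding \<kappa>_def by simp
    moreover have "prob_space \<kappa>" unfolding \<kappa>_def by (rule measure_pmf.prob_space_distr[OF mF])
    moreover have "distr \<kappa> borel fst = \<mu>" unfolding \<kappa>_def \<mu>_def by (rule distr_distr[OF mfst mF])
    moreover have "distr \<kappa> borel snd = empirical_measure what"
    proof -
      have "distr \<kappa> borel snd = distr (measure_pmf q) borel (snd \<circ> F)"
        unfolding \<kappa>_def by (rule distr_distr[OF msnd mF])
      also have "snd \<circ> F = what \<circ> fst" unfolding F_def by (auto simp: fun_eq_iff)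
      also have "distr (measure_pmf q) borel (what \<circ> fst) = distr (distr (measure_pmf q) (count_space UNIV) fst) borel what"
        by (rule distr_distr[symmetric]) auto
      also have "distr (measure_pmf q) (count_space UNIV) fst = measure_pmf (pmf_of_set UNIV)"
        unfolding map_pmf_rep_eq[symmetric] q_def map_fst_pair_pmf ..
      finally show ?thesis by (simp add: emp_eq)
    qed
    ultimately show ?thesis unfolding couplings_def by blast
  qed
  have cD: "continuous_on UNIV (\<lambda>p::'a \<times> 'a. nrm (fst p - snd p))"
    by (intro continuous_on_compose2[OF nrm_continuous[OF n]] continuous_intros) auto
  have mD: "(\<lambda>p::'a \<times> 'a. nrm (fst p - snd p)) \<in> borel_measurable borel"
    by (rule borel_measurable_continuous_onI[OF cD])
  have "wasserstein nrm \<mu> (empirical_measure what) \<le> (\<integral>\<^sup>+ p. ennreal (nrm (fst p - snd p)) \<partial>\<kappa>)"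
    unfolding wasserstein_def using kC by (rule INF_lower)
  also have "\<dots> = (\<integral>\<^sup>+ x. ennreal (nrm (fst (F x) - snd (F x))) \<partial>measure_pmf q)"
    unfolding \<kappa>_def by (rule nn_integral_distr[OF mF]) (use mD in measurable)
  also have "\<dots> = ennreal (\<integral>x. nrm (fst (F x) - snd (F x)) \<partial>measure_pmf q)"
    by (rule nn_integral_eq_integral) (auto intro: integrable_measure_pmf_finite[OF fq] simp: nrm_nonneg[OF n])
  also have "(\<integral>x. nrm (fst (F x) - snd (F x)) \<partial>measure_pmf q)
      = \<alpha> * ((1 / real CARD('k)) * (\<Sum>i\<in>UNIV. nrm (w1 i - what i)))
       + (1 - \<alpha>) * ((1 / real CARD('k)) * (\<Sum>i\<in>UNIV. nrm (w2 i - what i)))"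
    unfolding q_def int_q[OF a] unfolding F_def by (simp add: avg_mix)
  finally have wd: "wasserstein nrm \<mu> (empirical_measure what) \<le> ennreal \<theta>"
    using cost by (meson ennreal_leI order_trans)
  have Lm: "L \<in> borel_measurable borel" by (rule borel_measurable_continuous_onI[OF Lc])
  have "integral\<^sup>L \<mu> L = (\<integral>x. L ((fst \<circ> F) x) \<partial>measure_pmf q)"
    unfolding \<mu>_def by (rule integral_distr[OF mfF Lm])
  also have "\<dots> = \<alpha> * ((1 / real CARD('k)) * (\<Sum>i\<in>UNIV. L (w1 i)))
       + (1 - \<alpha>) * ((1 / real CARD('k)) * (\<Sum>i\<in>UNIV. L (w2 i)))"
    unfolding q_def int_q[OF a] unfolding F_def by (simp add: avg_mix)
  finally show ?thesis using muP wd by blast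
qed


lemma cross_ineq:
  fixes c1 c2 v1 v2 P \<theta> :: real
  assumes c1: "c1 < \<theta>" and c2: "c2 > \<theta>"
    and mixP: "\<And>\<alpha>. 0 \<le> \<alpha> \<Longrightarrow> \<alpha> \<le> 1 \<Longrightarrow> \<alpha> * c1 + (1 - \<alpha>) * c2 \<le> \<theta> \<Longrightarrow> \<alpha> * v1 + (1 - \<alpha>) * v2 \<le> P"
  shows "(\<theta> - c1) * (v2 - P) \<le> (c2 - \<theta>) * (P - v1)"
proof -
  define D where "D = c2 - c1"
  have D: "D > 0" using c1 c2 unfolding D_def by simp
  define \<alpha> where "\<alpha> = (c2 - \<theta>) / D"
  have a1: "1 - \<alpha> = (\<theta> - c1) / D" using D unfolding \<alpha>_def D_def by (simp add: field_simps)
  have a0: "0 \<le> \<alpha>" "\<alpha> \<le> 1" using D c1 c2 unfolding \<alpha>_def D_def by (auto simp: field_simps)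
  have "\<alpha> * c1 + (1 - \<alpha>) * c2 = ((c2 - \<theta>) * c1 + (\<theta> - c1) * c2) / D"
    unfolding a1 unfolding \<alpha>_def by (simp add: add_divide_distrib)
  also have "(c2 - \<theta>) * c1 + (\<theta> - c1) * c2 = \<theta> * D" unfolding D_def by (simp add: algebra_simps)
  finally have "\<alpha> * c1 + (1 - \<alpha>) * c2 = \<theta>" using D by simp
  then have "\<alpha> * v1 + (1 - \<alpha>) * v2 \<le> P" using mixP a0 by simp
  then have "((c2 - \<theta>) * v1 + (\<theta> - c1) * v2) / D \<le> P" unfolding a1 unfolding \<alpha>_def by (simp add: add_divide_distrib)
  then have "(c2 - \<theta>) * v1 + (\<theta> - c1) * v2 \<le> P * D" using D by (simp add: divide_le_eq)
  then show ?thesis unfolding D_def by (simp add: algebra_simps)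
qed

lemma lam_exists:
  fixes cst val :: "'c \<Rightarrow> real"
  assumes th: "\<theta> > 0" and c0: "c0 \<in> Cs" "cst c0 = 0"
    and mixP: "\<And>c1 c2 \<alpha>. c1 \<in> Cs \<Longrightarrow> c2 \<in> Cs \<Longrightarrow> 0 \<le> \<alpha> \<Longrightarrow> \<alpha> \<le> 1 \<Longrightarrow>
        \<alpha> * cst c1 + (1 - \<alpha>) * cst c2 \<le> \<theta> \<Longrightarrow> \<alpha> * val c1 + (1 - \<alpha>) * val c2 \<le> P"
  shows "\<exists>lam \<ge> 0. \<forall>c\<in>Cs. val c - lam * cst c \<le> P - lam * \<theta>"
proof -
  have single: "val c \<le> P" if "c \<in> Cs" "cst c \<le> \<theta>" for c
    using mixP[OF that(1) that(1), of 1] that by simp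
  have cross: "(\<theta> - cst c1) * (val c2 - P) \<le> (cst c2 - \<theta>) * (P - val c1)"
    if "c1 \<in> Cs" "c2 \<in> Cs" "cst c1 < \<theta>" "cst c2 > \<theta>" for c1 c2
    using that by (intro cross_ineq) (auto intro: mixP)
  define R where "R = {c\<in>Cs. cst c > \<theta>}"
  define sl where "sl = (\<lambda>c. (val c - P) / (cst c - \<theta>))"
  have sl_le: "sl c2 \<le> (P - val c1) / (\<theta> - cst c1)" if "c1 \<in> Cs" "cst c1 < \<theta>" "c2 \<in> R" for c1 c2
  proof -
    have "(\<theta> - cst c1) * (val c2 - P) \<le> (cst c2 - \<theta>) * (P - val c1)"
      using cross[OF that(1) _ that(2)] that(3) unfolding R_def by auto
    then show ?thesis using that unfolding sl_def R_def by (simp add: field_simps)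
  qed
  show ?thesis
  proof (cases "R = {}")
    case True
    then have "\<forall>c\<in>Cs. val c - 0 * cst c \<le> P - 0 * \<theta>" using single unfolding R_def by force
    then show ?thesis by (intro exI[of _ 0]) auto
  next
    case False
    have bdd: "bdd_above (sl ` R)"
      using sl_le[OF c0(1)] c0(2) th by (intro bdd_aboveI[where M="(P - val c0) / (\<theta> - cst c0)"]) auto
    define lam where "lam = max 0 (Sup (sl ` R))"
    have "val c - lam * cst c \<le> P - lam * \<theta>" if c: "c \<in> Cs" for c
    proof (cases "cst c > \<theta>")
      case True
      then have "c \<in> R" using c unfolding R_def by auto
      then have "sl c \<le> lam" unfolding lam_def using bdd by (meson cSUP_upper max.coboundedI2)
      then have "val c - P \<le> lam * (cst c - \<theta>)" using True unfolding sl_def by (simp add: divide_le_eq)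
      then show ?thesis by (simp add: algebra_simps)
    next
      case False
      show ?thesis
      proof (cases "cst c = \<theta>")
        case True then show ?thesis using single[OF c] by simp
      next
        case False
        then have lt: "cst c < \<theta>" using \<open>\<not> cst c > \<theta>\<close> by simp
        have "Sup (sl ` R) \<le> (P - val c) / (\<theta> - cst c)"
          using \<open>R \<noteq> {}\<close> sl_le[OF c lt] by (intro cSUP_least) auto
        moreover have "0 \<le> (P - val c) / (\<theta> - cst c)" using single[OF c] lt by simp
        ultimately have "lam \<le> (P - val c) / (\<theta> - cst c)" unfolding lam_def by simp
        then have "lam * (\<theta> - cst c) \<le> P - val c" using lt by (simp add: le_divide_eq)
        then show ?thesis by (simp add: algebra_simps)
      qed
    qed
    moreover have "lam \<ge> 0" unfolding lam_def by simp
    ultimately show ?thesis by blast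
  qed
qed


lemma inner_nonneg_vec: "(\<forall>r. 0 \<le> (a::real^'q) $ r) \<Longrightarrow> (\<forall>r. 0 \<le> (b::real^'q) $ r) \<Longrightarrow> 0 \<le> inner a b"
  unfolding inner_vec_def by (intro sum_nonneg) auto

lemma Min_le_inner:
  fixes \<rho> v :: "real^'m::finite"
  assumes "\<forall>j. 0 \<le> \<rho> $ j" "inner \<rho> (\<chi> j. 1) = 1"
  shows "Min (range (\<lambda>j. v $ j)) \<le> inner \<rho> v"
proof -
  define m where "m = Min (range (\<lambda>j. v $ j))"
  have sum1: "(\<Sum>j\<in>UNIV. \<rho> $ j) = 1" using assms(2) unfolding inner_vec_def by simp
  have "m = (\<Sum>j\<in>UNIV. \<rho> $ j * m)" by (simp add: sum_distrib_right[symmetric] sum1)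
  also have "\<dots> \<le> (\<Sum>j\<in>UNIV. \<rho> $ j * v $ j)"
    using assms(1) by (intro sum_mono mult_left_mono) (auto simp: m_def)
  also have "\<dots> = inner \<rho> v" unfolding inner_vec_def by simp
  finally show ?thesis unfolding m_def .
qed

lemma decomp_H: "inner (\<gamma>::real^'q) (h - (H::real^'n^'q) *v wh) = inner \<gamma> (h - H *v w) + inner (transpose H *v \<gamma>) (w - wh)"
proof -
  have "H *v w = H *v wh + H *v (w - wh)" by (metis mv_add add_diff_cancel_left' add.commute diff_add_cancel)
  then show ?thesis by (simp add: inner_diff_right inner_add_right inner_mv[symmetric] del: transpose_matrix_vector)
qed

lemma decomp_G: "inner (\<rho>::real^'m) ((G::real^'n^'m) *v (y - w) + g) = inner \<rho> (G *v (y - wh) + g) - inner (transpose G *v \<rho>) (w - wh)"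
proof -
  show ?thesis by (simp add: mv_diff inner_diff_right inner_add_right inner_mv[symmetric] del: transpose_matrix_vector)
qed

lemma pw:
  fixes G :: "real^'n::finite^'m::finite" and H :: "real^'n^'q::finite" and g :: "real^'m"
    and h :: "real^'q" and y w wh :: "real^'n" and nrm :: "real^'n \<Rightarrow> real"
    and \<rho> :: "real^'m" and \<gamma> \<eta> \<zeta> :: "real^'q"
  assumes n: "is_norm nrm" and wW: "\<forall>r. (H *v w) $ r \<le> h $ r"
    and c1: "inner \<rho> (G *v (y - wh) + g) + inner \<gamma> (h - H *v wh) \<le> s + z"
    and c2: "inner \<eta> (h - H *v wh) \<le> s + z"
    and c3: "inner \<zeta> (h - H *v wh) \<le> s"
    and c4: "dual_norm nrm (transpose H *v \<gamma> + transpose G *v \<rho>) \<le> lam"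
    and c5: "dual_norm nrm (transpose H *v \<eta>) \<le> lam"
    and c6: "dual_norm nrm (transpose H *v \<zeta>) \<le> lam"
    and c7: "inner \<rho> (\<chi> j. 1) = 1"
    and nn: "\<forall>r. 0 \<le> \<gamma> $ r" "\<forall>j. 0 \<le> \<rho> $ j" "\<forall>r. 0 \<le> \<eta> $ r" "\<forall>r. 0 \<le> \<zeta> $ r"
  shows "max (max (Min (range (\<lambda>j. (G *v (y - w) + g) $ j)) - z) (- z)) 0 \<le> s + lam * nrm (w - wh)"
proof -
  define u where "u = w - wh"
  have hw: "\<forall>r. 0 \<le> (h - H *v w) $ r" using wW by simp
  have nu: "nrm (- u) = nrm u" by (rule nrm_neg[OF n])
  have bnd: "- inner v u \<le> lam * nrm u" if "dual_norm nrm v \<le> lam" for v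
  proof -
    have "inner v (- u) \<le> dual_norm nrm v * nrm (- u)" by (rule dn_inner[OF n])
    also have "\<dots> \<le> lam * nrm u" using that nu nrm_nonneg[OF n, of u] by (simp add: mult_right_mono)
    finally show ?thesis by simp
  qed
  have p1: "Min (range (\<lambda>j. (G *v (y - w) + g) $ j)) - z \<le> s + lam * nrm u"
  proof -
    have "Min (range (\<lambda>j. (G *v (y - w) + g) $ j)) \<le> inner \<rho> (G *v (y - w) + g)"
      by (rule Min_le_inner[OF nn(2) c7])
    also have "\<dots> = inner \<rho> (G *v (y - wh) + g) - inner (transpose G *v \<rho>) u"
      unfolding u_def by (rule decomp_G)
    also have "inner \<gamma> (h - H *v wh) = inner \<gamma> (h - H *v w) + inner (transpose H *v \<gamma>) u"
      unfolding u_def by (rule decomp_H)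
    moreover have "0 \<le> inner \<gamma> (h - H *v w)" by (rule inner_nonneg_vec[OF nn(1) hw])
    moreover have "- inner (transpose H *v \<gamma> + transpose G *v \<rho>) u \<le> lam * nrm u" by (rule bnd[OF c4])
    ultimately show ?thesis using c1 by (simp add: inner_add_left)
  qed
  have p2: "- z \<le> s + lam * nrm u"
  proof -
    have "inner \<eta> (h - H *v wh) = inner \<eta> (h - H *v w) + inner (transpose H *v \<eta>) u"
      unfolding u_def by (rule decomp_H)
    moreover have "0 \<le> inner \<eta> (h - H *v w)" by (rule inner_nonneg_vec[OF nn(3) hw])
    moreover have "- inner (transpose H *v \<eta>) u \<le> lam * nrm u" by (rule bnd[OF c5])
    ultimately show ?thesis using c2 by linarith
  qed
  have p3: "0 \<le> s + lam * nrm u"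
  proof -
    have "inner \<zeta> (h - H *v wh) = inner \<zeta> (h - H *v w) + inner (transpose H *v \<zeta>) u"
      unfolding u_def by (rule decomp_H)
    moreover have "0 \<le> inner \<zeta> (h - H *v w)" by (rule inner_nonneg_vec[OF nn(4) hw])
    moreover have "- inner (transpose H *v \<zeta>) u \<le> lam * nrm u" by (rule bnd[OF c6])
    ultimately show ?thesis using c3 by linarith
  qed
  show ?thesis using p1 p2 p3 unfolding u_def by simp
qed


theorem proposition1:
  fixes c :: "'m::finite \<Rightarrow> real^'n::finite"
    and d :: "'m \<Rightarrow> real"
    and G :: "real^'n^'m" and g :: "real^'m"
    and H :: "real^'n^'q::finite" and h :: "real^'q"
    and W :: "(real^'n) set"
    and what :: "'k::finite \<Rightarrow> real^'n"
    and nrm :: "real^'n \<Rightarrow> real"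
    and \<theta> :: real and y :: "real^'n" and z :: real
  assumes nrm: "is_norm nrm"
    and c_nz: "\<And>j. c j \<noteq> 0"
    and G_def: "G = (\<chi> j. - (1 / norm (c j)) *\<^sub>R c j)"
    and g_def: "g = (\<chi> j. d j / norm (c j))"
    and W_def: "W = {w. \<forall>r. (H *v w) $ r \<le> h $ r}"
    and W_ne: "W \<noteq> {}" and W_compact: "compact W"
    and what_in: "\<And>i. what i \<in> W"
    and theta_pos: "\<theta> > 0"
  shows
   "(SUP \<mu>\<in>{\<mu>\<in>prob_measures_on W. wasserstein nrm \<mu> (empirical_measure what) \<le> ennreal \<theta>}.
        integral\<^sup>L \<mu> (\<lambda>w. max (max ((MIN j. (d j - inner (c j) (y - w)) / norm (c j)) - z) (- z)) 0))
    = Inf {lam * \<theta> + (1 / real CARD('k)) * (\<Sum>i\<in>UNIV. s i) | lam s \<rho> \<gamma> \<eta> \<zeta>.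
        (\<forall>i::'k. inner (\<rho> i) (G *v (y - what i) + g) + inner (\<gamma> i) (h - H *v what i) \<le> s i + z
          \<and> inner (\<eta> i) (h - H *v what i) \<le> s i + z
          \<and> inner (\<zeta> i) (h - H *v what i) \<le> s i
          \<and> dual_norm nrm (transpose H *v \<gamma> i + transpose G *v \<rho> i) \<le> lam
          \<and> dual_norm nrm (transpose H *v \<eta> i) \<le> lam
          \<and> dual_norm nrm (transpose H *v \<zeta> i) \<le> lam
          \<and> inner (\<rho> i) (\<chi> j. 1) = 1
          \<and> (\<forall>r. 0 \<le> \<gamma> i $ r) \<and> (\<forall>j. 0 \<le> (\<rho> i :: real^'m) $ j)
          \<and> (\<forall>r. 0 \<le> \<eta> i $ r) \<and> (\<forall>r. 0 \<le> (\<zeta> i :: real^'q) $ r))}"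

proof -
  let ?Y = "{lam * \<theta> + (1 / real CARD('k)) * (\<Sum>i\<in>UNIV. s i) | lam s \<rho> \<gamma> \<eta> \<zeta>.
        (\<forall>i::'k. inner (\<rho> i) (G *v (y - what i) + g) + inner (\<gamma> i) (h - H *v what i) \<le> s i + z
          \<and> inner (\<eta> i) (h - H *v what i) \<le> s i + z
          \<and> inner (\<zeta> i) (h - H *v what i) \<le> s i
          \<and> dual_norm nrm (transpose H *v \<gamma> i + transpose G *v \<rho> i) \<le> lam
          \<and> dual_norm nrm (transpose H *v \<eta> i) \<le> lam
          \<and> dual_norm nrm (transpose H *v \<zeta> i) \<le> lam
          \<and> inner (\<rho> i) (\<chi> j. 1) = 1
          \<and> (\<forall>r. 0 \<le> \<gamma> i $ r) \<and> (\<forall>j. 0 \<le> (\<rho> i :: real^'m) $ j)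
          \<and> (\<forall>r. 0 \<le> \<eta> i $ r) \<and> (\<forall>r. 0 \<le> (\<zeta> i :: real^'q) $ r))}"
  define L where "L = (\<lambda>w::real^'n. max (max ((MIN j. (d j - inner (c j) (y - w)) / norm (c j)) - z) (- z)) 0)"
  define B where "B = {\<mu>\<in>prob_measures_on W. wasserstein nrm \<mu> (empirical_measure what) \<le> ennreal \<theta>}"
  define X where "X = (\<lambda>\<mu>. integral\<^sup>L \<mu> L) ` B"
  define N where "N = real CARD('k)"
  have Npos: "N > 0" unfolding N_def by simp
  have vj: "(G *v v + g) $ j = (d j - inner (c j) v) / norm (c j)" for v j
    unfolding G_def g_def
    by (simp add: matrix_vector_mult_def inner_vec_def sum_negf sum_divide_distrib[symmetric] diff_divide_distrib)
  have Lw: "L w = max (max (Min (range (\<lambda>j. (G *v (y - w) + g) $ j)) - z) (- z)) 0" for w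
    unfolding L_def by (simp only: vj)
  have Lc: "continuous_on UNIV L"
  proof -
    have "continuous_on UNIV (\<lambda>w::real^'n. MIN j. (d j - inner (c j) (y - w)) / norm (c j))"
      using c_nz by (intro continuous_on_Min_fin continuous_intros) auto
    then show ?thesis unfolding L_def by (intro continuous_intros)
  qed
  have Wc: "closed W" using W_compact by (rule compact_imp_closed)
  have Wbd: "bounded W" using W_compact by (rule compact_imp_bounded)
  obtain Bd where Bd: "\<And>w. w \<in> W \<Longrightarrow> \<bar>L w\<bar> \<le> Bd"
  proof -
    have "compact (L ` W)" by (rule compact_continuous_image[OF continuous_on_subset[OF Lc] W_compact]) simp
    then have "bounded (L ` W)" by (rule compact_imp_bounded)
    then obtain a where "\<forall>x\<in>L ` W. norm x \<le> a" unfolding bounded_iff by blast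
    then show ?thesis using that by auto
  qed
  have Lge: "L w \<ge> 0" "L w \<ge> - z" "L w \<ge> Min (range (\<lambda>j. (G *v (y - w) + g) $ j)) - z" for w
    unfolding Lw by auto
  obtain i0 :: 'k where True by blast
  have weak: "x \<le> v" if x: "x \<in> X" and v: "v \<in> ?Y" for x v
  proof -
    from x obtain \<mu> where mu: "\<mu> \<in> B" and xe: "x = integral\<^sup>L \<mu> L" unfolding X_def by blast
    from v obtain lam s \<rho> \<gamma> \<eta> \<zeta> where ve: "v = lam * \<theta> + (1 / real CARD('k)) * (\<Sum>i\<in>UNIV. s i)"
      and cons: "\<forall>i::'k. inner (\<rho> i) (G *v (y - what i) + g) + inner (\<gamma> i) (h - H *v what i) \<le> s i + z
          \<and> inner (\<eta> i) (h - H *v what i) \<le> s i + z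
          \<and> inner (\<zeta> i) (h - H *v what i) \<le> s i
          \<and> dual_norm nrm (transpose H *v \<gamma> i + transpose G *v \<rho> i) \<le> lam
          \<and> dual_norm nrm (transpose H *v \<eta> i) \<le> lam
          \<and> dual_norm nrm (transpose H *v \<zeta> i) \<le> lam
          \<and> inner (\<rho> i) (\<chi> j. 1) = 1
          \<and> (\<forall>r. 0 \<le> \<gamma> i $ r) \<and> (\<forall>j. 0 \<le> (\<rho> i :: real^'m) $ j)
          \<and> (\<forall>r. 0 \<le> \<eta> i $ r) \<and> (\<forall>r. 0 \<le> (\<zeta> i :: real^'q) $ r)"
      by blast
    have "dual_norm nrm (transpose H *v \<eta> i0) \<le> lam" using cons by blast
    then have lam: "lam \<ge> 0" using dn_nonneg[OF nrm, of "transpose H *v \<eta> i0"] by linarith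
    have pt: "L w \<le> s i + lam * nrm (w - what i)" if "w \<in> W" for w i
    proof -
      have wW: "\<forall>r. (H *v w) $ r \<le> h $ r" using that W_def by auto
      show ?thesis unfolding Lw using cons[rule_format, of i]
        by (intro pw[OF nrm wW]) auto
    qed
    have "integral\<^sup>L \<mu> L \<le> lam * \<theta> + (1 / real CARD('k)) * (\<Sum>i\<in>UNIV. s i)"
      using mu unfolding B_def
      by (intro weak_dual[OF nrm Wc _ _ Lc Bd lam theta_pos pt]) auto
    then show ?thesis using xe ve by simp
  qed
  have xbd: "x \<le> Bd" if "x \<in> X" for x
  proof -
    from that obtain \<mu> where mu: "\<mu> \<in> B" and xe: "x = integral\<^sup>L \<mu> L" unfolding X_def by blast
    have pt0: "L w \<le> Bd + 0 * nrm (w - what i)" if "w \<in> W" for w i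
      using Bd[OF that] by (simp add: abs_le_iff)
    have "integral\<^sup>L \<mu> L \<le> 0 * \<theta> + (1 / real CARD('k)) * (\<Sum>i\<in>(UNIV::'k set). Bd)"
    proof (rule weak_dual[OF nrm Wc _ _ Lc Bd order_refl theta_pos])
      show "\<mu> \<in> prob_measures_on W" "wasserstein nrm \<mu> (empirical_measure what) \<le> ennreal \<theta>"
        using mu unfolding B_def by auto
      show "\<And>w i. w \<in> W \<Longrightarrow> L w \<le> Bd + 0 * nrm (w - what i)" by (rule pt0)
    qed
    then show ?thesis using xe by simp
  qed
  define cst where "cst = (\<lambda>w::'k \<Rightarrow> real^'n. (1 / real CARD('k)) * (\<Sum>i\<in>UNIV. nrm (w i - what i)))"
  define val where "val = (\<lambda>w::'k \<Rightarrow> real^'n. (1 / real CARD('k)) * (\<Sum>i\<in>UNIV. L (w i)))"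
  define Cs where "Cs = {w::'k \<Rightarrow> real^'n. \<forall>i. w i \<in> W}"
  have inX: "\<alpha> * val w1 + (1 - \<alpha>) * val w2 \<in> X"
    if hh: "w1 \<in> Cs" "w2 \<in> Cs" "0 \<le> \<alpha>" "\<alpha> \<le> 1" "\<alpha> * cst w1 + (1 - \<alpha>) * cst w2 \<le> \<theta>" for w1 w2 \<alpha>
  proof -
    obtain \<mu> where "\<mu> \<in> prob_measures_on W" "wasserstein nrm \<mu> (empirical_measure what) \<le> ennreal \<theta>"
      "integral\<^sup>L \<mu> L = \<alpha> * val w1 + (1 - \<alpha>) * val w2"
      using mix[OF nrm Wc _ _ hh(3,4) Lc, of w1 w2 what \<theta>] hh unfolding Cs_def cst_def val_def by auto
    then show ?thesis unfolding X_def B_def by force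
  qed
  have c0: "what \<in> Cs" "cst what = 0" unfolding Cs_def cst_def using what_in by (auto simp: nrm_zero[OF nrm])
  have Xne: "X \<noteq> {}" using inX[OF c0(1) c0(1), of 1] c0(2) theta_pos by auto
  have bddX: "bdd_above X" using xbd by (intro bdd_aboveI) auto
  define P where "P = Sup X"
  have mixP: "\<alpha> * val w1 + (1 - \<alpha>) * val w2 \<le> P"
    if "w1 \<in> Cs" "w2 \<in> Cs" "0 \<le> \<alpha>" "\<alpha> \<le> 1" "\<alpha> * cst w1 + (1 - \<alpha>) * cst w2 \<le> \<theta>" for w1 w2 \<alpha>
    unfolding P_def using inX[OF that] bddX by (rule cSup_upper)
  have "\<exists>lam \<ge> 0. \<forall>c\<in>Cs. val c - lam * cst c \<le> P - lam * \<theta>"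
    apply (rule lam_exists)
    apply (rule theta_pos)
    apply (rule c0(1))
    apply (rule c0(2))
    apply (rule mixP)
    apply assumption+
    done
  then obtain lam where lam: "lam \<ge> 0" and LA0: "\<forall>c\<in>Cs. val c - lam * cst c \<le> P - lam * \<theta>"
    by blast
  have LA: "val w - lam * cst w \<le> P - lam * \<theta>" if "w \<in> Cs" for w using LA0 that by blast
  have "\<forall>i. \<exists>w. w \<in> W \<and> (\<forall>w'\<in>W. L w' - lam * nrm (w' - what i) \<le> L w - lam * nrm (w - what i))"
  proof
    fix i
    have "continuous_on W (\<lambda>w. L w - lam * nrm (w - what i))"
      by (intro continuous_intros continuous_on_subset[OF Lc] continuous_on_compose2[OF nrm_continuous[OF nrm]]) auto
    then show "\<exists>w. w \<in> W \<and> (\<forall>w'\<in>W. L w' - lam * nrm (w' - what i) \<le> L w - lam * nrm (w - what i))"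
      using continuous_attains_sup[OF W_compact W_ne] by blast
  qed
  then obtain wst where wst: "\<And>i. wst i \<in> W"
    "\<And>i w'. w' \<in> W \<Longrightarrow> L w' - lam * nrm (w' - what i) \<le> L (wst i) - lam * nrm (wst i - what i)"
    using choice[of "\<lambda>i w. w \<in> W \<and> (\<forall>w'\<in>W. L w' - lam * nrm (w' - what i) \<le> L w - lam * nrm (w - what i))"] by blast
  define s0 where "s0 = (\<lambda>i. L (wst i) - lam * nrm (wst i - what i))"
  have avg0: "(1 / real CARD('k)) * (\<Sum>i\<in>UNIV. s0 i) \<le> P - lam * \<theta>"
  proof -
    have "(1 / real CARD('k)) * (\<Sum>i\<in>UNIV. s0 i) = val wst - lam * cst wst"
      unfolding s0_def val_def cst_def by (simp add: sum_subtractf sum_distrib_left algebra_simps)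
    also have "\<dots> \<le> P - lam * \<theta>" using LA wst(1) unfolding Cs_def by blast
    finally show ?thesis .
  qed
  have s0ge: "s0 i \<ge> L w - lam * nrm (w - what i)" if "w \<in> W" for w i
    unfolding s0_def using wst(2)[OF that] .
  have s0what: "s0 i \<ge> L (what i)" for i using s0ge[of "what i" i] what_in[of i] by (simp add: nrm_zero[OF nrm])
  have H0: "dual_norm nrm (transpose H *v (0::real^'q)) = 0"
    by (simp only: matrix_vector_mult_0_right dn_zero[OF nrm])
  have approx: "\<exists>v\<in>?Y. v \<le> P + eps * (\<theta> + 1)" if eps: "eps > 0" for eps
  proof -
    have hypA: "Min (range (\<lambda>j. (G *v (y - w) + g) $ j)) - lam * nrm (w - what i) \<le> s0 i + z"
      if "w \<in> W" for w i using Lge(3)[of w] s0ge[OF that, of i] by linarith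
    have "\<forall>i. \<exists>\<rho> \<gamma>. inner \<rho> (G *v (y - what i) + g) + inner \<gamma> (h - H *v what i) \<le> (s0 i + z) + eps
     \<and> dual_norm nrm (transpose H *v \<gamma> + transpose G *v \<rho>) \<le> lam + eps
     \<and> inner \<rho> (\<chi> j. 1) = 1 \<and> (\<forall>r. 0 \<le> \<gamma> $ r) \<and> (\<forall>j. 0 \<le> \<rho> $ j)"
      using stepA[OF nrm W_def W_ne Wbd lam eps hypA] by blast
    then obtain \<rho>f where "\<forall>i. \<exists>\<gamma>. inner (\<rho>f i) (G *v (y - what i) + g) + inner \<gamma> (h - H *v what i) \<le> (s0 i + z) + eps
     \<and> dual_norm nrm (transpose H *v \<gamma> + transpose G *v \<rho>f i) \<le> lam + eps
     \<and> inner (\<rho>f i) (\<chi> j. 1) = 1 \<and> (\<forall>r. 0 \<le> \<gamma> $ r) \<and> (\<forall>j. 0 \<le> \<rho>f i $ j)"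
      by (rule choice[THEN exE]) blast
    then obtain \<gamma>f where R: "\<forall>i. inner (\<rho>f i) (G *v (y - what i) + g) + inner (\<gamma>f i) (h - H *v what i) \<le> (s0 i + z) + eps
     \<and> dual_norm nrm (transpose H *v \<gamma>f i + transpose G *v \<rho>f i) \<le> lam + eps
     \<and> inner (\<rho>f i) (\<chi> j. 1) = 1 \<and> (\<forall>r. 0 \<le> \<gamma>f i $ r) \<and> (\<forall>j. 0 \<le> \<rho>f i $ j)"
      by (rule choice[THEN exE]) blast
    define sD where "sD = (\<lambda>i. s0 i + eps)"
    define \<eta>0 where "\<eta>0 = (\<lambda>i::'k. 0::real^'q)"
    have consD: "\<forall>i::'k. inner (\<rho>f i) (G *v (y - what i) + g) + inner (\<gamma>f i) (h - H *v what i) \<le> sD i + z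
          \<and> inner (\<eta>0 i) (h - H *v what i) \<le> sD i + z
          \<and> inner (\<eta>0 i) (h - H *v what i) \<le> sD i
          \<and> dual_norm nrm (transpose H *v \<gamma>f i + transpose G *v \<rho>f i) \<le> lam + eps
          \<and> dual_norm nrm (transpose H *v \<eta>0 i) \<le> lam + eps
          \<and> dual_norm nrm (transpose H *v \<eta>0 i) \<le> lam + eps
          \<and> inner (\<rho>f i) (\<chi> j. 1) = 1
          \<and> (\<forall>r. 0 \<le> \<gamma>f i $ r) \<and> (\<forall>j. 0 \<le> (\<rho>f i :: real^'m) $ j)
          \<and> (\<forall>r. 0 \<le> \<eta>0 i $ r) \<and> (\<forall>r. 0 \<le> (\<eta>0 i :: real^'q) $ r)"
    proof
      fix i
      have a: "0 \<le> sD i + z" "0 \<le> sD i" using s0what[of i] Lge(1,2)[of "what i"] eps unfolding sD_def by linarith+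
      show "inner (\<rho>f i) (G *v (y - what i) + g) + inner (\<gamma>f i) (h - H *v what i) \<le> sD i + z
          \<and> inner (\<eta>0 i) (h - H *v what i) \<le> sD i + z
          \<and> inner (\<eta>0 i) (h - H *v what i) \<le> sD i
          \<and> dual_norm nrm (transpose H *v \<gamma>f i + transpose G *v \<rho>f i) \<le> lam + eps
          \<and> dual_norm nrm (transpose H *v \<eta>0 i) \<le> lam + eps
          \<and> dual_norm nrm (transpose H *v \<eta>0 i) \<le> lam + eps
          \<and> inner (\<rho>f i) (\<chi> j. 1) = 1
          \<and> (\<forall>r. 0 \<le> \<gamma>f i $ r) \<and> (\<forall>j. 0 \<le> (\<rho>f i :: real^'m) $ j)
          \<and> (\<forall>r. 0 \<le> \<eta>0 i $ r) \<and> (\<forall>r. 0 \<le> (\<eta>0 i :: real^'q) $ r)"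
        using R[rule_format, of i] a H0 lam eps unfolding \<eta>0_def sD_def by (simp add: algebra_simps)
    qed
    have vin: "(lam + eps) * \<theta> + (1 / real CARD('k)) * (\<Sum>i\<in>UNIV. sD i) \<in> ?Y"
      using consD by blast
    have "(1 / real CARD('k)) * (\<Sum>i\<in>UNIV. sD i) = (1 / real CARD('k)) * (\<Sum>i\<in>UNIV. s0 i) + eps"
      unfolding sD_def by (simp add: sum.distrib algebra_simps)
    then have "(lam + eps) * \<theta> + (1 / real CARD('k)) * (\<Sum>i\<in>UNIV. sD i) \<le> P + eps * (\<theta> + 1)"
      using avg0 by (simp add: algebra_simps)
    then show ?thesis using vin by blast
  qed
  have Yne: "?Y \<noteq> {}"
  proof
    assume e: "?Y = {}"
    have "\<exists>v\<in>?Y. v \<le> P + 1 * (\<theta> + 1)" by (rule approx[OF zero_less_one])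
    then show False by (simp only: e bex_empty)
  qed
  obtain x0 where x0: "x0 \<in> X" using Xne by blast
  have bddY: "bdd_below ?Y" by (rule bdd_belowI[where m=x0]) (rule weak[OF x0])
  have le1: "Inf ?Y \<le> P"
  proof (rule field_le_epsilon)
    fix e :: real assume e: "e > 0"
    define eps where "eps = e / (\<theta> + 1)"
    have eps: "eps > 0" using e theta_pos unfolding eps_def by simp
    have epe: "eps * (\<theta> + 1) = e" using theta_pos unfolding eps_def by simp
    obtain v where "v \<in> ?Y" "v \<le> P + eps * (\<theta> + 1)" using approx[OF eps] by blast
    then show "Inf ?Y \<le> P + e" using cInf_lower[OF _ bddY, of v] epe by simp
  qed
  have le2: "P \<le> Inf ?Y"
    unfolding P_def
    apply (rule cSup_least[OF Xne])
    apply (rule cInf_greatest[OF Yne])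
    apply (erule (1) weak)
    done
  have "Sup X = Inf ?Y" using le1 le2 unfolding P_def by simp
  then show ?thesis unfolding X_def B_def L_def .
qed


end
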